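(* For every integer $t\ge 14$, every graph $K_{3,t}^+$ belongs to $\mathcal{S}_3$.
   Context: Graphs may have parallel edges but no loops. For an integer $t\ge4$, $K_{3,t}^+$ denotes any $4$-edge-connected graph on $t+3$ vertices that contains the complete bipartite graph $K_{3,t}$ as a spanning subgraph. $G\in\mathcal{S}_3$ means: for every $\beta:V(G)\to\mathbb{Z}_3$ with $\sum_v\beta(v)\equiv0\pmod3$ there is a strongly-connected orientation $D$ of $G$ with $d^+_D(v)-d^-_D(v)\equiv\beta(v)\pmod3$ for all $v$. *)

theory Defs
  imports Main
begin

text \<open>A loopless multigraph: vertex set V, edge set E (edge identifiers, so parallel
edges are allowed), and an endpoint map giving each edge a reference pair of
distinct endpoints (the reference direction is arbitrary).\<close>

definition multigraph :: "'a set \<Rightarrow> 'e set \<Rightarrow> ('e \<Rightarrow> 'a \<times> 'a) \<Rightarrow> bool" where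
  "multigraph V E ends \<longleftrightarrow> finite V \<and> finite E \<and>
     (\<forall>e\<in>E. fst (ends e) \<in> V \<and> snd (ends e) \<in> V \<and> fst (ends e) \<noteq> snd (ends e))"

definition ug_rel :: "'e set \<Rightarrow> ('e \<Rightarrow> 'a \<times> 'a) \<Rightarrow> ('a \<times> 'a) set" where
  "ug_rel E ends = {(u, v). \<exists>e\<in>E. ends e = (u, v) \<or> ends e = (v, u)}"

definition connected_mg :: "'a set \<Rightarrow> 'e set \<Rightarrow> ('e \<Rightarrow> 'a \<times> 'a) \<Rightarrow> bool" where
  "connected_mg V E ends \<longleftrightarrow> (\<forall>u\<in>V. \<forall>v\<in>V. (u, v) \<in> (ug_rel E ends)\<^sup>*)"

definition edge_connected :: "nat \<Rightarrow> 'a set \<Rightarrow> 'e set \<Rightarrow> ('e \<Rightarrow> 'a \<times> 'a) \<Rightarrow> bool" where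
  "edge_connected k V E ends \<longleftrightarrow> 2 \<le> card V \<and>
     (\<forall>F. F \<subseteq> E \<and> card F < k \<longrightarrow> connected_mg V (E - F) ends)"

definition contains_spanning_K3t :: "nat \<Rightarrow> 'a set \<Rightarrow> 'e set \<Rightarrow> ('e \<Rightarrow> 'a \<times> 'a) \<Rightarrow> bool" where
  "contains_spanning_K3t t V E ends \<longleftrightarrow> (\<exists>A B. A \<inter> B = {} \<and> A \<union> B = V \<and> card A = 3 \<and> card B = t \<and>
     (\<forall>a\<in>A. \<forall>b\<in>B. \<exists>e\<in>E. ends e = (a, b) \<or> ends e = (b, a)))"

definition is_K3t_plus :: "nat \<Rightarrow> 'a set \<Rightarrow> 'e set \<Rightarrow> ('e \<Rightarrow> 'a \<times> 'a) \<Rightarrow> bool" where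
  "is_K3t_plus t V E ends \<longleftrightarrow> multigraph V E ends \<and> card V = t + 3 \<and>
     edge_connected 4 V E ends \<and> contains_spanning_K3t t V E ends"

text \<open>An orientation D: D e = True keeps the reference direction of e, False reverses it.\<close>
definition tail :: "('e \<Rightarrow> 'a \<times> 'a) \<Rightarrow> ('e \<Rightarrow> bool) \<Rightarrow> 'e \<Rightarrow> 'a" where
  "tail ends D e = (if D e then fst (ends e) else snd (ends e))"

definition head :: "('e \<Rightarrow> 'a \<times> 'a) \<Rightarrow> ('e \<Rightarrow> bool) \<Rightarrow> 'e \<Rightarrow> 'a" where
  "head ends D e = (if D e then snd (ends e) else fst (ends e))"

definition arcs :: "'e set \<Rightarrow> ('e \<Rightarrow> 'a \<times> 'a) \<Rightarrow> ('e \<Rightarrow> bool) \<Rightarrow> ('a \<times> 'a) set" where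
  "arcs E ends D = {(tail ends D e, head ends D e) | e. e \<in> E}"

definition strongly_connected_orient :: "'a set \<Rightarrow> 'e set \<Rightarrow> ('e \<Rightarrow> 'a \<times> 'a) \<Rightarrow> ('e \<Rightarrow> bool) \<Rightarrow> bool" where
  "strongly_connected_orient V E ends D \<longleftrightarrow> (\<forall>u\<in>V. \<forall>v\<in>V. (u, v) \<in> (arcs E ends D)\<^sup>*)"

definition outdeg :: "'e set \<Rightarrow> ('e \<Rightarrow> 'a \<times> 'a) \<Rightarrow> ('e \<Rightarrow> bool) \<Rightarrow> 'a \<Rightarrow> nat" where
  "outdeg E ends D v = card {e\<in>E. tail ends D e = v}"

definition indeg :: "'e set \<Rightarrow> ('e \<Rightarrow> 'a \<times> 'a) \<Rightarrow> ('e \<Rightarrow> bool) \<Rightarrow> 'a \<Rightarrow> nat" where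
  "indeg E ends D v = card {e\<in>E. head ends D e = v}"

text \<open>G \<in> S_3: every zero-sum Z_3-boundary beta (represented by integers, taken mod 3)
is realised by a strongly connected orientation.\<close>
definition in_S3 :: "'a set \<Rightarrow> 'e set \<Rightarrow> ('e \<Rightarrow> 'a \<times> 'a) \<Rightarrow> bool" where
  "in_S3 V E ends \<longleftrightarrow> (\<forall>\<beta> :: 'a \<Rightarrow> int. (\<Sum>v\<in>V. \<beta> v) mod 3 = 0 \<longrightarrow>
     (\<exists>D. strongly_connected_orient V E ends D \<and>
        (\<forall>v\<in>V. (int (outdeg E ends D v) - int (indeg E ends D v)) mod 3 = \<beta> v mod 3)))"

end

theory Submission
  imports Defs
begin



lemma card_filter_sum: "finite S \<Longrightarrow> int (card {e\<in>S. P e}) = (\<Sum>e\<in>S. if P e then 1 else 0)"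
proof -
  assume f: "finite S"
  have "int (card {e\<in>S. P e}) = (\<Sum>e\<in>{e\<in>S. P e}. 1)" by simp
  also have "\<dots> = (\<Sum>e\<in>S. if P e then 1 else 0)" by (rule sum.inter_filter[OF f])
  finally show ?thesis .
qed

definition netc :: "('e \<Rightarrow> 'a \<times> 'a) \<Rightarrow> ('e \<Rightarrow> bool) \<Rightarrow> 'a \<Rightarrow> 'e \<Rightarrow> int" where
  "netc ends D v e = (if tail ends D e = v then 1 else 0) - (if head ends D e = v then 1 else 0)"

lemma net_sum: "finite E \<Longrightarrow> int (outdeg E ends D v) - int (indeg E ends D v) = (\<Sum>e\<in>E. netc ends D v e)"
  unfolding outdeg_def indeg_def netc_def
  by (simp add: card_filter_sum sum_subtractf)

lemma netc_flip: "netc ends (D(e := \<not> D e)) v e = - netc ends D v e"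
  unfolding netc_def tail_def head_def by auto

lemma netc_other: "e' \<noteq> e \<Longrightarrow> netc ends (D(e := x)) v e' = netc ends D v e'"
  unfolding netc_def tail_def head_def by auto

lemma netc_nonincid: "fst (ends e) \<noteq> v \<Longrightarrow> snd (ends e) \<noteq> v \<Longrightarrow> netc ends D v e = 0"
  unfolding netc_def tail_def head_def by auto

lemma netc_incid: "fst (ends e) \<noteq> snd (ends e) \<Longrightarrow> fst (ends e) = v \<or> snd (ends e) = v \<Longrightarrow> netc ends D v e = 1 \<or> netc ends D v e = -1"
  unfolding netc_def tail_def head_def by auto

lemma netc_total: "x \<in> V \<Longrightarrow> fst (ends e) \<in> V \<Longrightarrow> snd (ends e) \<in> V \<Longrightarrow> finite V \<Longrightarrow>
   (\<Sum>v\<in>V. netc ends D v e) = 0"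
  unfolding netc_def by (simp add: sum_subtractf tail_def head_def)




locale K3 =
  fixes V :: "'a set" and E :: "'e set" and ends :: "'e \<Rightarrow> 'a \<times> 'a"
    and A B :: "'a set" and a0 a1 a2 :: 'a and t :: nat and \<beta> :: "'a \<Rightarrow> int"
  assumes mg: "multigraph V E ends"
    and deg4: "\<And>v. v \<in> V \<Longrightarrow> 4 \<le> card {e\<in>E. fst (ends e) = v \<or> snd (ends e) = v}"
    and disj: "A \<inter> B = {}" and AB: "A \<union> B = V" and Adef: "A = {a0, a1, a2}"
    and d01: "a0 \<noteq> a1" and d02: "a0 \<noteq> a2" and d12: "a1 \<noteq> a2"
    and cardB: "card B = t" and t14: "14 \<le> t"
    and K: "\<And>a b. a \<in> A \<Longrightarrow> b \<in> B \<Longrightarrow> \<exists>e\<in>E. ends e = (a, b) \<or> ends e = (b, a)"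
    and bsum: "(\<Sum>v\<in>V. \<beta> v) mod 3 = 0"
begin

lemma finV: "finite V" and finE: "finite E" using mg unfolding multigraph_def by auto
lemma finB: "finite B" using finV AB by auto
lemma finA: "finite A" using Adef by auto
lemma ends_in: "e \<in> E \<Longrightarrow> fst (ends e) \<in> V \<and> snd (ends e) \<in> V \<and> fst (ends e) \<noteq> snd (ends e)"
  using mg unfolding multigraph_def by auto

definition st :: "'a \<Rightarrow> 'a \<Rightarrow> 'e" where
  "st b a = (SOME e. e \<in> E \<and> (ends e = (a, b) \<or> ends e = (b, a)))"

lemma st: assumes "a \<in> A" "b \<in> B" shows "st b a \<in> E \<and> (ends (st b a) = (a, b) \<or> ends (st b a) = (b, a))"
proof -
  have "\<exists>e. e \<in> E \<and> (ends e = (a, b) \<or> ends e = (b, a))" using K[OF assms] by blast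
  then show ?thesis unfolding st_def by (rule someI_ex)
qed

lemma AnB: "a \<in> A \<Longrightarrow> b \<in> B \<Longrightarrow> a \<noteq> b" using disj by auto

lemma st_inj: "a \<in> A \<Longrightarrow> b \<in> B \<Longrightarrow> a' \<in> A \<Longrightarrow> b' \<in> B \<Longrightarrow> st b a = st b' a' \<Longrightarrow> b = b' \<and> a = a'"
proof -
  assume as: "a \<in> A" "b \<in> B" "a' \<in> A" "b' \<in> B" "st b a = st b' a'"
  have e: "ends (st b a) = ends (st b' a')" using as by simp
  have n1: "a \<noteq> b'" "a' \<noteq> b" using AnB as by auto
  from st[OF as(1,2)] st[OF as(3,4)] e n1 show ?thesis by (metis prod.inject)
qed

definition starE :: "'e set" where "starE = (\<lambda>(b, a). st b a) ` (B \<times> A)"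
definition Rset :: "'e set" where "Rset = E - starE"

lemma starE_sub: "starE \<subseteq> E" unfolding starE_def using st by auto
lemma finR: "finite Rset" unfolding Rset_def using finE by auto
lemma inj_st: "inj_on (\<lambda>(b, a). st b a) (B \<times> A)"
  unfolding inj_on_def using st_inj by auto

definition xR :: "('e \<Rightarrow> bool) \<Rightarrow> 'a \<Rightarrow> int" where
  "xR Or v = (\<Sum>e\<in>Rset. netc ends Or v e)"

definition mixed :: "('e \<Rightarrow> bool) \<Rightarrow> 'a set" where
  "mixed Or = {b\<in>B. (\<beta> b - xR Or b) mod 3 \<noteq> 0}"

lemma flipx: "e \<in> Rset \<Longrightarrow> xR (Or(e := \<not> Or e)) v = xR Or v - 2 * netc ends Or v e"
proof -
  assume e: "e \<in> Rset"
  have h1: "xR (Or(e := \<not> Or e)) v = netc ends (Or(e := \<not> Or e)) v e + (\<Sum>e'\<in>Rset - {e}. netc ends (Or(e := \<not> Or e)) v e')"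
    unfolding xR_def using finR e by (rule sum.remove)
  have h2: "(\<Sum>e'\<in>Rset - {e}. netc ends (Or(e := \<not> Or e)) v e') = (\<Sum>e'\<in>Rset - {e}. netc ends Or v e')"
    by (rule sum.cong) (auto simp: netc_other)
  have h3: "xR Or v = netc ends Or v e + (\<Sum>e'\<in>Rset - {e}. netc ends Or v e')"
    unfolding xR_def using finR e by (rule sum.remove)
  show ?thesis using h1 h2 h3 netc_flip[of ends Or e v] by simp
qed

lemma exists_max: "\<exists>Or. \<forall>Or'. card (mixed Or') \<le> card (mixed Or)"
proof -
  have "\<forall>y. True \<longrightarrow> card (mixed y) < Suc (card B)"
    using finB by (auto simp: mixed_def intro!: card_mono le_imp_less_Suc)
  from ex_has_greatest_nat[of "\<lambda>_. True" undefined "\<lambda>Or. card (mixed Or)", OF _ this] show ?thesis by auto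
qed

end



context K3 begin

definition incid :: "'a \<Rightarrow> 'e \<Rightarrow> bool" where
  "incid v e \<longleftrightarrow> fst (ends e) = v \<or> snd (ends e) = v"
definition oth :: "'a \<Rightarrow> 'e \<Rightarrow> 'a" where
  "oth v e = (if fst (ends e) = v then snd (ends e) else fst (ends e))"
definition ismax :: "('e \<Rightarrow> bool) \<Rightarrow> bool" where
  "ismax Or \<longleftrightarrow> (\<forall>O'. card (mixed O') \<le> card (mixed Or))"

lemma mixed_sub: "mixed Or \<subseteq> B" unfolding mixed_def by auto
lemma fin_mixed: "finite (mixed Or)" using finB mixed_sub finite_subset by blast

lemma grow_contra:
  assumes "ismax Or" "z \<in> B" "z \<notin> mixed Or" "mixed Or \<union> {z} \<subseteq> mixed O'"
  shows False
proof -
  have "card (mixed Or \<union> {z}) = Suc (card (mixed Or))" using assms(3) fin_mixed by simp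
  moreover have "card (mixed Or \<union> {z}) \<le> card (mixed O')" by (rule card_mono[OF fin_mixed assms(4)])
  moreover have "card (mixed O') \<le> card (mixed Or)" using assms(1) unfolding ismax_def by auto
  ultimately show False by simp
qed

lemma incid_ends: "incid v e \<Longrightarrow> ends e = (v, oth v e) \<or> ends e = (oth v e, v)"
  unfolding incid_def oth_def by (cases "ends e") auto

lemma netc_incid': "e \<in> E \<Longrightarrow> incid v e \<Longrightarrow> netc ends D v e = 1 \<or> netc ends D v e = -1"
  using netc_incid[of ends e v D] ends_in[of e] unfolding incid_def by auto

lemma netc_nonincid': "\<not> incid v e \<Longrightarrow> netc ends D v e = 0"
  using netc_nonincid[of ends e v D] unfolding incid_def by auto

lemma R_edge: assumes b: "b \<in> B" shows "\<exists>e\<in>Rset. incid b e"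
proof -
  let ?S = "{e\<in>E. fst (ends e) = b \<or> snd (ends e) = b}"
  let ?T = "(\<lambda>a. st b a) ` A"
  have c4: "4 \<le> card ?S" using deg4 b AB by auto
  have "card ?T \<le> 3" using card_image_le[OF finA, of "\<lambda>a. st b a"] Adef d01 d02 d12 by auto
  then have "\<not> ?S \<subseteq> ?T" using c4 card_mono[OF finite_imageI[OF finA]] by fastforce
  then obtain e where e: "e \<in> ?S" "e \<notin> ?T" by blast
  have "e \<notin> starE"
  proof
    assume "e \<in> starE"
    then obtain b' a' where ba: "b' \<in> B" "a' \<in> A" "e = st b' a'" unfolding starE_def by auto
    then have "ends e = (a', b') \<or> ends e = (b', a')" using st by auto
    moreover have "a' \<noteq> b" using AnB ba b by auto
    ultimately have "b' = b" using e(1) by auto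
    then show False using e(2) ba by auto
  qed
  then show ?thesis using e unfolding Rset_def incid_def by auto
qed

lemma Z_nbr:
  assumes mx: "ismax Or" and z: "z \<in> B" "z \<notin> mixed Or" and e: "e \<in> Rset" "incid z e"
  shows "oth z e \<in> mixed Or \<and> oth z e \<notin> mixed (Or(e := \<not> Or e))"
proof (rule ccontr)
  let ?w = "oth z e"
  let ?O = "Or(e := \<not> Or e)"
  assume H: "\<not> (?w \<in> mixed Or \<and> ?w \<notin> mixed ?O)"
  have eE: "e \<in> E" using e Rset_def by auto
  have en: "ends e = (z, ?w) \<or> ends e = (?w, z)" using incid_ends[OF e(2)] .
  have z0: "(\<beta> z - xR Or z) mod 3 = 0" using z unfolding mixed_def by auto
  have "netc ends Or z e = 1 \<or> netc ends Or z e = -1" using netc_incid'[OF eE e(2)] .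
  then have "(\<beta> z - xR ?O z) mod 3 \<noteq> 0" using flipx[OF e(1), of Or z] z0 by (auto; presburger)
  then have zm: "z \<in> mixed ?O" using z unfolding mixed_def by auto
  have "mixed Or \<union> {z} \<subseteq> mixed ?O"
  proof
    fix b assume b: "b \<in> mixed Or \<union> {z}"
    show "b \<in> mixed ?O"
    proof (cases "b = z")
      case True then show ?thesis using zm by simp
    next
      case False
      show ?thesis
      proof (cases "b = ?w")
        case True then show ?thesis using H b False by auto
      next
        case nw: False
        have "\<not> incid b e" using en False nw unfolding incid_def by auto
        then have "xR ?O b = xR Or b" using flipx[OF e(1), of Or b] netc_nonincid' by simp
        then show ?thesis using b False unfolding mixed_def by auto
      qed
    qed
  qed
  then show False using grow_contra[OF mx z] by blast
qed

lemma Z_inj: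
  assumes mx: "ismax Or" and z1: "z1 \<in> B" "z1 \<notin> mixed Or" and z2: "z2 \<in> B" "z2 \<notin> mixed Or"
    and e1: "e1 \<in> Rset" "incid z1 e1" and e2: "e2 \<in> Rset" "incid z2 e2"
    and w: "oth z1 e1 = oth z2 e2"
  shows "z1 = z2"
proof (rule ccontr)
  assume ne: "z1 \<noteq> z2"
  define w where "w = oth z1 e1"
  have N1: "w \<in> mixed Or" "w \<notin> mixed (Or(e1 := \<not> Or e1))" using Z_nbr[OF mx z1 e1] w_def by auto
  have N2: "w \<notin> mixed (Or(e2 := \<not> Or e2))" using Z_nbr[OF mx z2 e2] w w_def by auto
  have e1E: "e1 \<in> E" and e2E: "e2 \<in> E" using e1 e2 Rset_def by auto
  have en1: "ends e1 = (z1, w) \<or> ends e1 = (w, z1)" using incid_ends[OF e1(2)] w_def by simp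
  have en2: "ends e2 = (z2, w) \<or> ends e2 = (w, z2)" using incid_ends[OF e2(2)] w w_def by simp
  have wz1: "w \<noteq> z1" "w \<noteq> z2" using N1 z1 z2 by auto
  have e12: "e1 \<noteq> e2" using en1 en2 ne wz1 by auto
  define O1 where "O1 = Or(e1 := \<not> Or e1)"
  define O2 where "O2 = O1(e2 := \<not> O1 e2)"
  have x2: "xR O2 v = xR Or v - 2 * netc ends Or v e1 - 2 * netc ends Or v e2" for v
    unfolding O2_def using flipx[OF e2(1), of O1 v] flipx[OF e1(1), of Or v] netc_other[OF e12[symmetric], of ends Or "\<not> Or e1" v]
    unfolding O1_def by simp
  have wB: "w \<in> B" using N1 mixed_sub by auto
  have r0: "(\<beta> w - xR Or w) mod 3 \<noteq> 0" using N1 unfolding mixed_def by auto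
  have r1: "(\<beta> w - xR Or w + 2 * netc ends Or w e1) mod 3 = 0"
    proof -
    have "(\<beta> w - xR (Or(e1 := \<not> Or e1)) w) mod 3 = 0" using N1(2) wB unfolding mixed_def by auto
    then show ?thesis using flipx[OF e1(1), of Or w] by (simp add: algebra_simps)
  qed
  have r2: "(\<beta> w - xR Or w + 2 * netc ends Or w e2) mod 3 = 0"
    proof -
    have "(\<beta> w - xR (Or(e2 := \<not> Or e2)) w) mod 3 = 0" using N2 wB unfolding mixed_def by auto
    then show ?thesis using flipx[OF e2(1), of Or w] by (simp add: algebra_simps)
  qed
  have i1: "incid w e1" "incid w e2" using en1 en2 unfolding incid_def by auto
  have n1: "netc ends Or w e1 = 1 \<or> netc ends Or w e1 = -1" using netc_incid'[OF e1E i1(1)] .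
  have n2: "netc ends Or w e2 = 1 \<or> netc ends Or w e2 = -1" using netc_incid'[OF e2E i1(2)] .
  have "(\<beta> w - xR O2 w) mod 3 \<noteq> 0" unfolding x2 using r0 r1 r2 n1 n2 by (auto; presburger)
  then have wm: "w \<in> mixed O2" using wB unfolding mixed_def by auto
  have nz1: "\<not> incid z1 e2" using en2 ne wz1 unfolding incid_def by auto
  have z0: "(\<beta> z1 - xR Or z1) mod 3 = 0" using z1 unfolding mixed_def by auto
  have "netc ends Or z1 e1 = 1 \<or> netc ends Or z1 e1 = -1" using netc_incid'[OF e1E e1(2)] .
  then have "(\<beta> z1 - xR O2 z1) mod 3 \<noteq> 0" unfolding x2 using netc_nonincid'[OF nz1] z0 by (auto; presburger)
  then have zm: "z1 \<in> mixed O2" using z1 unfolding mixed_def by auto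
  have "mixed Or \<union> {z1} \<subseteq> mixed O2"
  proof
    fix b assume b: "b \<in> mixed Or \<union> {z1}"
    show "b \<in> mixed O2"
    proof (cases "b = z1 \<or> b = w")
      case True then show ?thesis using zm wm by auto
    next
      case False
      have bz2: "b \<noteq> z2" using b z2 ne by auto
      have "\<not> incid b e1" "\<not> incid b e2" using en1 en2 False bz2 unfolding incid_def by auto
      then have "xR O2 b = xR Or b" unfolding x2 using netc_nonincid' by simp
      then show ?thesis using b False unfolding mixed_def by auto
    qed
  qed
  then show False using grow_contra[OF mx z1] by blast
qed

lemma seven: assumes mx: "ismax Or" shows "7 \<le> card (mixed Or)"
proof -
  let ?Z = "B - mixed Or"
  define f where "f z = oth z (SOME e. e \<in> Rset \<and> incid z e)" for z
  have fe: "(SOME e. e \<in> Rset \<and> incid z e) \<in> Rset \<and> incid z (SOME e. e \<in> Rset \<and> incid z e)" if "z \<in> B" for z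
    using R_edge[OF that] by (metis (mono_tags, lifting) someI_ex)
  have inj: "inj_on f ?Z"
    unfolding inj_on_def f_def using Z_inj[OF mx] fe by blast
  have im: "f ` ?Z \<subseteq> mixed Or"
    unfolding f_def using Z_nbr[OF mx] fe by blast
  have "card ?Z \<le> card (mixed Or)" using card_inj_on_le[OF inj im fin_mixed] .
  moreover have "card ?Z + card (mixed Or) = t"
    using card_Diff_subset[OF fin_mixed mixed_sub] card_mono[OF finB mixed_sub] cardB by simp
  ultimately show ?thesis using t14 by simp
qed

end



context K3 begin

definition sg :: "('e \<Rightarrow> bool) \<Rightarrow> 'a \<Rightarrow> int" where
  "sg Or b = (if (\<beta> b - xR Or b) mod 3 = 1 then 1 else -1)"

definition outf :: "('e \<Rightarrow> bool) \<Rightarrow> ('a \<Rightarrow> 'a) \<Rightarrow> 'a \<Rightarrow> 'a \<Rightarrow> bool" where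
  "outf Or aj b a = (if b \<in> mixed Or then (if sg Or b = 1 then a \<noteq> aj b else a = aj b)
                     else (\<exists>e\<in>Rset. head ends Or e = b))"

definition bE :: "'e \<Rightarrow> 'a" where "bE e = (if fst (ends e) \<in> B then fst (ends e) else snd (ends e))"
definition aE :: "'e \<Rightarrow> 'a" where "aE e = (if fst (ends e) \<in> B then snd (ends e) else fst (ends e))"

definition Dfin :: "('e \<Rightarrow> bool) \<Rightarrow> ('a \<Rightarrow> 'a) \<Rightarrow> 'e \<Rightarrow> bool" where
  "Dfin Or aj e = (if e \<in> starE then (fst (ends e) = bE e \<longleftrightarrow> outf Or aj (bE e) (aE e)) else Or e)"

lemma st_in_starE: "b \<in> B \<Longrightarrow> a \<in> A \<Longrightarrow> st b a \<in> starE"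
  unfolding starE_def by auto

lemma bE_st: "b \<in> B \<Longrightarrow> a \<in> A \<Longrightarrow> bE (st b a) = b \<and> aE (st b a) = a"
  using st[of a b] AnB[of a b] disj unfolding bE_def aE_def by auto

lemma star_dir:
  assumes b: "b \<in> B" and a: "a \<in> A"
  shows "tail ends (Dfin Or aj) (st b a) = (if outf Or aj b a then b else a) \<and>
         head ends (Dfin Or aj) (st b a) = (if outf Or aj b a then a else b)"
proof -
  have "ends (st b a) = (a, b) \<or> ends (st b a) = (b, a)" using st[OF a b] by auto
  moreover have "a \<noteq> b" using AnB a b by auto
  ultimately show ?thesis
    using bE_st[OF b a] st_in_starE[OF b a]
    unfolding tail_def head_def Dfin_def by auto
qed

lemma netc_st_b:
  assumes b: "b \<in> B" and a: "a \<in> A"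
  shows "netc ends (Dfin Or aj) b (st b a) = (if outf Or aj b a then 1 else -1)"
  using star_dir[OF b a, of Or aj] AnB[OF a b] unfolding netc_def by auto

lemma netc_st_a:
  assumes b: "b \<in> B" and a: "a \<in> A"
  shows "netc ends (Dfin Or aj) a (st b a) = (if outf Or aj b a then -1 else 1)"
  using star_dir[OF b a, of Or aj] AnB[OF a b] unfolding netc_def by auto

lemma netc_st_0:
  assumes b: "b \<in> B" and a: "a \<in> A" and v: "v \<noteq> a" "v \<noteq> b"
  shows "netc ends (Dfin Or aj) v (st b a) = 0"
  using star_dir[OF b a, of Or aj] v unfolding netc_def by auto

lemma xR_D: "xR (Dfin Or aj) v = xR Or v"
proof -
  have "Dfin Or aj e = Or e" if "e \<in> Rset" for e using that unfolding Dfin_def Rset_def by auto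
  then show ?thesis unfolding xR_def netc_def tail_def head_def by (intro sum.cong) auto
qed

definition net :: "('e \<Rightarrow> bool) \<Rightarrow> 'a \<Rightarrow> int" where
  "net D v = (\<Sum>e\<in>E. netc ends D v e)"

lemma net_split: "net (Dfin Or aj) v = xR Or v + (\<Sum>b\<in>B. \<Sum>a\<in>A. netc ends (Dfin Or aj) v (st b a))"
proof -
  have E: "Rset \<union> starE = E" "Rset \<inter> starE = {}" using starE_sub unfolding Rset_def by auto
  have fs: "finite starE" using finite_subset[OF starE_sub finE] .
  have "net (Dfin Or aj) v = (\<Sum>e\<in>Rset. netc ends (Dfin Or aj) v e) + (\<Sum>e\<in>starE. netc ends (Dfin Or aj) v e)"
    unfolding net_def using sum.union_disjoint[OF finR fs E(2), of "netc ends (Dfin Or aj) v"] by (simp only: E(1))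
  also have "(\<Sum>e\<in>Rset. netc ends (Dfin Or aj) v e) = xR Or v" using xR_D unfolding xR_def by simp
  also have "(\<Sum>e\<in>starE. netc ends (Dfin Or aj) v e) = (\<Sum>(b, a)\<in>B \<times> A. netc ends (Dfin Or aj) v (st b a))"
    unfolding starE_def by (subst sum.reindex[OF inj_st]) (simp add: case_prod_unfold)
  also have "\<dots> = (\<Sum>b\<in>B. \<Sum>a\<in>A. netc ends (Dfin Or aj) v (st b a))"
    by (rule sum.cartesian_product[symmetric])
  finally show ?thesis .
qed

lemma net_b: assumes b: "b \<in> B"
  shows "net (Dfin Or aj) b = xR Or b + (\<Sum>a\<in>A. if outf Or aj b a then 1 else -1)"
proof -
  have "(\<Sum>b'\<in>B. \<Sum>a\<in>A. netc ends (Dfin Or aj) b (st b' a)) =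
        (\<Sum>b'\<in>B. if b' = b then (\<Sum>a\<in>A. if outf Or aj b a then 1 else -1) else 0)"
  proof (rule sum.cong)
    fix b' assume b': "b' \<in> B"
    show "(\<Sum>a\<in>A. netc ends (Dfin Or aj) b (st b' a)) = (if b' = b then (\<Sum>a\<in>A. if outf Or aj b a then 1 else -1) else 0)"
    proof (cases "b' = b")
      case True then show ?thesis using netc_st_b[OF b] by simp
    next
      case False
      have "netc ends (Dfin Or aj) b (st b' a) = 0" if "a \<in> A" for a
        using netc_st_0[OF b' that, of b] AnB[OF that b] False by auto
      then show ?thesis using False by simp
    qed
  qed simp
  then show ?thesis using net_split[of Or aj b] b finB by simp
qed

lemma net_a: assumes a: "a \<in> A"
  shows "net (Dfin Or aj) a = xR Or a + (\<Sum>b\<in>B. if outf Or aj b a then -1 else 1)"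
proof -
  have "(\<Sum>b\<in>B. \<Sum>a'\<in>A. netc ends (Dfin Or aj) a (st b a')) = (\<Sum>b\<in>B. if outf Or aj b a then -1 else 1)"
  proof (rule sum.cong)
    fix b assume b: "b \<in> B"
    have "(\<Sum>a'\<in>A. netc ends (Dfin Or aj) a (st b a')) = (\<Sum>a'\<in>A. if a' = a then (if outf Or aj b a then -1 else 1) else 0)"
    proof (rule sum.cong)
      fix a' assume a': "a' \<in> A"
      show "netc ends (Dfin Or aj) a (st b a') = (if a' = a then (if outf Or aj b a then -1 else 1) else 0)"
        using netc_st_a[OF b a', of Or aj] netc_st_0[OF b a', of a Or aj] AnB[OF a b] by auto
    qed simp
    then show "(\<Sum>a'\<in>A. netc ends (Dfin Or aj) a (st b a')) = (if outf Or aj b a then -1 else 1)"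
      using a finA by simp
  qed simp
  then show ?thesis using net_split[of Or aj a] by simp
qed

lemma net_total: "(\<Sum>v\<in>V. net D v) = 0"
proof -
  have "(\<Sum>v\<in>V. net D v) = (\<Sum>e\<in>E. \<Sum>v\<in>V. netc ends D v e)" unfolding net_def by (rule sum.swap)
  also have "\<dots> = 0"
  proof (rule sum.neutral, rule ballI)
    fix e assume e: "e \<in> E"
    show "(\<Sum>v\<in>V. netc ends D v e) = 0"
      using ends_in[OF e] finV unfolding netc_def tail_def head_def by (simp add: sum_subtractf)
  qed
  finally show ?thesis .
qed

lemma sumA: "(\<Sum>a\<in>A. f a) = f a0 + f a1 + f a2"
  using Adef d01 d02 d12 by (simp add: add.assoc)

lemma ar1: "(y - x) mod 3 = 1 \<Longrightarrow> ((x::int) + 1) mod 3 = y mod 3" by presburger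
lemma ar2: "(y - x) mod 3 \<noteq> 1 \<Longrightarrow> (y - x) mod 3 \<noteq> 0 \<Longrightarrow> ((x::int) - 1) mod 3 = y mod 3" by presburger
lemma ar3: "(y - x) mod 3 = 0 \<Longrightarrow> ((x::int) + 3) mod 3 = y mod 3" by presburger
lemma ar4: "(y - x) mod 3 = 0 \<Longrightarrow> ((x::int) - 3) mod 3 = y mod 3" by presburger

lemma b_ok:
  assumes b: "b \<in> B" and aj: "aj b \<in> A" and mx: "ismax Or"
  shows "(net (Dfin Or aj) b) mod 3 = \<beta> b mod 3"
proof (cases "b \<in> mixed Or")
  case True
  then have r: "(\<beta> b - xR Or b) mod 3 \<noteq> 0" unfolding mixed_def by auto
  show ?thesis
  proof (cases "(\<beta> b - xR Or b) mod 3 = 1")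
    case True
    have "(\<Sum>a\<in>A. if outf Or aj b a then 1 else -1) = (1::int)"
      using `b \<in> mixed Or` True aj unfolding sumA outf_def sg_def using Adef d01 d02 d12 by auto
    then show ?thesis using net_b[OF b, of Or aj] ar1[OF True] by simp
  next
    case False
    have "(\<Sum>a\<in>A. if outf Or aj b a then 1 else -1) = (-1::int)"
      using `b \<in> mixed Or` False aj unfolding sumA outf_def sg_def using Adef d01 d02 d12 by auto
    then show ?thesis using net_b[OF b, of Or aj] ar2[OF False r] by simp
  qed
next
  case False
  then have r: "(\<beta> b - xR Or b) mod 3 = 0" using b unfolding mixed_def by auto
  have "(\<Sum>a\<in>A. if outf Or aj b a then 1 else -1) = (3::int) \<or> (\<Sum>a\<in>A. if outf Or aj b a then 1 else -1) = (-3::int)"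
    using False unfolding sumA outf_def by auto
  then show ?thesis using net_b[OF b, of Or aj] ar3[OF r] ar4[OF r] by auto
qed

end



context K3 begin

lemma all_ok:
  assumes mx: "ismax Or" and aj: "\<And>b. b \<in> B \<Longrightarrow> aj b \<in> A"
    and h0: "(net (Dfin Or aj) a0 - \<beta> a0) mod 3 = 0" and h1: "(net (Dfin Or aj) a1 - \<beta> a1) mod 3 = 0"
  shows "\<forall>v\<in>V. net (Dfin Or aj) v mod 3 = \<beta> v mod 3"
proof -
  let ?f = "\<lambda>v. net (Dfin Or aj) v - \<beta> v"
  have dB: "3 dvd ?f v" if "v \<in> B" for v using b_ok[where aj=aj and Or=Or, OF that aj[OF that] mx] by (simp add: mod_eq_dvd_iff)
  have dA: "3 dvd ?f v" if "v \<in> V - {a2}" for v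
  proof -
    have "v \<in> A \<union> B" using that AB by blast
    then have "v \<in> B \<or> v = a0 \<or> v = a1" using that Adef by blast
    then show ?thesis using dB h0 h1 by (auto simp: dvd_eq_mod_eq_0)
  qed
  have "a2 \<in> A" using Adef by simp
  then have a2V: "a2 \<in> V" using AB by blast
  have s1: "(\<Sum>v\<in>V. ?f v) = - (\<Sum>v\<in>V. \<beta> v)" using net_total[of "Dfin Or aj"] by (simp add: sum_subtractf)
  have s2: "3 dvd (\<Sum>v\<in>V. \<beta> v)" using bsum by (simp add: dvd_eq_mod_eq_0)
  have s3: "3 dvd (\<Sum>v\<in>V. ?f v)" unfolding s1 using s2 by (simp only: dvd_minus_iff)
  have s4: "(\<Sum>v\<in>V. ?f v) = ?f a2 + (\<Sum>v\<in>V - {a2}. ?f v)" using sum.remove[OF finV a2V] .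
  have s5: "3 dvd (\<Sum>v\<in>V - {a2}. ?f v)" using dA by (rule dvd_sum)
  have "3 dvd ?f a2" using s3 unfolding s4 using dvd_add_left_iff[OF s5] by blast
  then have "net (Dfin Or aj) a2 mod 3 = \<beta> a2 mod 3" by (simp add: mod_eq_dvd_iff)
  moreover have "net (Dfin Or aj) v mod 3 = \<beta> v mod 3" if "v \<in> V - {a2}" for v
    using dA[OF that] by (simp add: mod_eq_dvd_iff)
  ultimately show ?thesis by blast
qed

lemma arc_in: "e \<in> E \<Longrightarrow> (tail ends D e, head ends D e) \<in> arcs E ends D"
  unfolding arcs_def by auto

lemma arc_st:
  assumes b: "b \<in> B" and a: "a \<in> A"
  shows "(if outf Or aj b a then (b, a) else (a, b)) \<in> arcs E ends (Dfin Or aj)"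
  using arc_in[of "st b a" "Dfin Or aj"] star_dir[OF b a, of Or aj] st[OF a b] by (auto split: if_splits)

lemma arc_R:
  assumes e: "e \<in> Rset"
  shows "(tail ends Or e, head ends Or e) \<in> arcs E ends (Dfin Or aj)"
proof -
  have "Dfin Or aj e = Or e" using e unfolding Dfin_def Rset_def by auto
  then show ?thesis using arc_in[of e "Dfin Or aj"] e unfolding Rset_def tail_def head_def by auto
qed

lemma mixed_both:
  assumes m: "b \<in> mixed Or" and aj: "aj b \<in> A"
  shows "(\<exists>a\<in>A. outf Or aj b a) \<and> (\<exists>a\<in>A. \<not> outf Or aj b a)"
proof -
  obtain a' where a': "a' \<in> A" "a' \<noteq> aj b" using Adef d01 d02 d12 aj by auto
  show ?thesis using m a' aj unfolding outf_def by (cases "sg Or b = 1") auto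
qed

lemma conn:
  assumes mx: "ismax Or" and aj: "\<And>b. b \<in> B \<Longrightarrow> aj b \<in> A"
    and h: "(a0, a1) \<in> (arcs E ends (Dfin Or aj))\<^sup>*" "(a0, a2) \<in> (arcs E ends (Dfin Or aj))\<^sup>*"
           "(a1, a0) \<in> (arcs E ends (Dfin Or aj))\<^sup>*" "(a2, a0) \<in> (arcs E ends (Dfin Or aj))\<^sup>*"
  shows "strongly_connected_orient V E ends (Dfin Or aj)"
proof -
  let ?R = "(arcs E ends (Dfin Or aj))\<^sup>*"
  have hubA: "(a0, a) \<in> ?R \<and> (a, a0) \<in> ?R" if "a \<in> A" for a
    using that h Adef by blast
  have hubM: "(a0, b) \<in> ?R \<and> (b, a0) \<in> ?R" if bm: "b \<in> mixed Or" for b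
  proof -
    have bB: "b \<in> B" using bm mixed_sub by auto
    obtain x y where x: "x \<in> A" "outf Or aj b x" and y: "y \<in> A" "\<not> outf Or aj b y"
      using mixed_both[where aj=aj, OF bm aj[OF bB]] by auto
    have "(b, x) \<in> arcs E ends (Dfin Or aj)" using arc_st[OF bB x(1), of Or aj] x by simp
    moreover have "(y, b) \<in> arcs E ends (Dfin Or aj)" using arc_st[OF bB y(1), of Or aj] y by simp
    ultimately show ?thesis using hubA[OF x(1)] hubA[OF y(1)]
      by (meson rtrancl.rtrancl_into_rtrancl converse_rtrancl_into_rtrancl)
  qed
  have hubB: "(a0, b) \<in> ?R \<and> (b, a0) \<in> ?R" if bB: "b \<in> B" for b
  proof (cases "b \<in> mixed Or")
    case True then show ?thesis using hubM by auto
  next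
    case Z: False
    have a0A: "a0 \<in> A" using Adef by auto
    show ?thesis
    proof (cases "\<exists>e\<in>Rset. head ends Or e = b")
      case True
      then obtain e where e: "e \<in> Rset" "head ends Or e = b" by auto
      have eE: "e \<in> E" using e Rset_def by auto
      have inc: "incid b e" using e(2) unfolding incid_def head_def by (auto split: if_splits)
      have tl: "tail ends Or e = oth b e"
        using e(2) ends_in[OF eE] unfolding head_def tail_def oth_def by (auto split: if_splits)
      have wm: "oth b e \<in> mixed Or" using Z_nbr[OF mx bB Z e(1) inc] by auto
      have "(oth b e, b) \<in> arcs E ends (Dfin Or aj)" using arc_R[where aj=aj and Or=Or, OF e(1)] tl e(2) by simp
      moreover have "outf Or aj b a0" using Z True unfolding outf_def by auto
      then have "(b, a0) \<in> arcs E ends (Dfin Or aj)" using arc_st[OF bB a0A, of Or aj] by simp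
      ultimately show ?thesis using hubM[OF wm] by (meson rtrancl.rtrancl_into_rtrancl r_into_rtrancl)
    next
      case False
      obtain e where e: "e \<in> Rset" "incid b e" using R_edge[OF bB] by auto
      have eE: "e \<in> E" using e Rset_def by auto
      have hd: "head ends Or e \<noteq> b" using False e by auto
      have tl: "tail ends Or e = b \<and> head ends Or e = oth b e"
        using hd e(2) ends_in[OF eE] unfolding head_def tail_def oth_def incid_def by (auto split: if_splits)
      have wm: "oth b e \<in> mixed Or" using Z_nbr[OF mx bB Z e] by auto
      have "(b, oth b e) \<in> arcs E ends (Dfin Or aj)" using arc_R[where aj=aj and Or=Or, OF e(1)] tl by simp
      moreover have "\<not> outf Or aj b a0" using Z False unfolding outf_def by auto
      then have "(a0, b) \<in> arcs E ends (Dfin Or aj)" using arc_st[OF bB a0A, of Or aj] by simp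
      ultimately show ?thesis using hubM[OF wm] by (meson converse_rtrancl_into_rtrancl r_into_rtrancl)
    qed
  qed
  have "(a0, v) \<in> ?R \<and> (v, a0) \<in> ?R" if "v \<in> V" for v
    using that AB hubA hubB by blast
  then show ?thesis unfolding strongly_connected_orient_def by (meson rtrancl_trans)
qed

end



lemma obtain_k: "finite S \<Longrightarrow> k \<le> card S \<Longrightarrow> \<exists>xs. distinct xs \<and> set xs \<subseteq> S \<and> length xs = k"
proof -
  assume f: "finite S" and k: "k \<le> card S"
  obtain ys where ys: "set ys = S" "distinct ys" using finite_distinct_list[OF f] by blast
  have "length ys = card S" using distinct_card[OF ys(2)] ys(1) by simp
  then show ?thesis using ys k by (intro exI[of _ "take k ys"]) (auto dest: in_set_takeD)
qed

lemma len4: "length xs = 4 \<Longrightarrow> \<exists>c1 c2 c3 c4. xs = [c1, c2, c3, c4]"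
  by (simp add: length_Suc_conv numeral_eq_Suc) blast
lemma len7: "length xs = 7 \<Longrightarrow> \<exists>c1 c2 c3 c4 c5 c6 c7. xs = [c1, c2, c3, c4, c5, c6, c7]"
  by (simp add: length_Suc_conv numeral_eq_Suc) blast

lemma pick2: "s1 = 1 \<or> s1 = -1 \<Longrightarrow> s2 = 1 \<or> s2 = -1 \<Longrightarrow>
  \<exists>g1 g2. ((d::int) + (if g1 then s1 else - s1) + (if g2 then s2 else - s2)) mod 3 = 0"
proof -
  assume s: "s1 = 1 \<or> s1 = -1" "s2 = 1 \<or> s2 = -1"
  show ?thesis
  proof (rule ccontr)
    assume H: "\<not> ?thesis"
    have "(d + s1 + s2) mod 3 \<noteq> 0" using H by (metis (full_types))
    moreover have "(d + s1 - s2) mod 3 \<noteq> 0" using H by (metis (full_types) diff_conv_add_uminus)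
    moreover have "(d - s1 + s2) mod 3 \<noteq> 0" using H by (metis (full_types) diff_conv_add_uminus)
    moreover have "(d - s1 - s2) mod 3 \<noteq> 0" using H by (metis (full_types) diff_conv_add_uminus)
    ultimately show False using s by presburger
  qed
qed

context K3 begin

lemma sg_pm: "sg Or b = 1 \<or> sg Or b = -1" unfolding sg_def by auto

lemma h_mixed: "b \<in> mixed Or \<Longrightarrow> (if outf Or aj b a then -1 else 1) = (if a = aj b then sg Or b else - sg Or b)"
  unfolding outf_def using sg_pm[of Or b] by auto

lemma outf_cong: "aj b = aj' b \<Longrightarrow> outf Or aj b a = outf Or aj' b a"
  unfolding outf_def by simp

definition ajg :: "('a \<Rightarrow> 'a) \<Rightarrow> 'a \<Rightarrow> 'a \<Rightarrow> 'a \<Rightarrow> 'a \<Rightarrow> bool \<Rightarrow> bool \<Rightarrow> bool \<Rightarrow> bool \<Rightarrow> 'a \<Rightarrow> 'a" where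
  "ajg base c1 c2 c3 c4 g1 g2 g3 g4 b = (if b = c1 then (if g1 then a0 else a2) else if b = c2 then (if g2 then a0 else a2)
     else if b = c3 then (if g3 then a1 else a2) else if b = c4 then (if g4 then a1 else a2) else base b)"

lemma finish:
  assumes mx: "ismax Or" and base: "\<And>b. b \<in> B \<Longrightarrow> base b \<in> A"
    and cs: "c1 \<in> mixed Or" "c2 \<in> mixed Or" "c3 \<in> mixed Or" "c4 \<in> mixed Or"
    and dc: "distinct [c1, c2, c3, c4]"
    and hub: "\<And>g1 g2 g3 g4. let D = Dfin Or (ajg base c1 c2 c3 c4 g1 g2 g3 g4) in
       (a0, a1) \<in> (arcs E ends D)\<^sup>* \<and> (a0, a2) \<in> (arcs E ends D)\<^sup>* \<and>
       (a1, a0) \<in> (arcs E ends D)\<^sup>* \<and> (a2, a0) \<in> (arcs E ends D)\<^sup>*"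
  shows "\<exists>D. strongly_connected_orient V E ends D \<and> (\<forall>v\<in>V. net D v mod 3 = \<beta> v mod 3)"
proof -
  let ?C = "{c1, c2, c3, c4}"
  have CB: "?C \<subseteq> B" using cs mixed_sub by auto
  let ?aj = "ajg base c1 c2 c3 c4"
  have ajA: "?aj g1 g2 g3 g4 b \<in> A" if "b \<in> B" for g1 g2 g3 g4 b
    using base[OF that] Adef unfolding ajg_def by auto
  define h where "h aj a b = (if outf Or aj b a then -1 else (1::int))" for aj a b
  define s1 where "s1 = sg Or c1"
  define s2 where "s2 = sg Or c2"
  define s3 where "s3 = sg Or c3"
  define s4 where "s4 = sg Or c4"
  have split: "(\<Sum>b\<in>B. h (?aj g1 g2 g3 g4) a b) = (\<Sum>b\<in>B - ?C. h base a b) + (h (?aj g1 g2 g3 g4) a c1 + h (?aj g1 g2 g3 g4) a c2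
      + h (?aj g1 g2 g3 g4) a c3 + h (?aj g1 g2 g3 g4) a c4)" for g1 g2 g3 g4 a
  proof -
    have "(\<Sum>b\<in>B. h (?aj g1 g2 g3 g4) a b) = (\<Sum>b\<in>B - ?C. h (?aj g1 g2 g3 g4) a b) + (\<Sum>b\<in>?C. h (?aj g1 g2 g3 g4) a b)"
      by (rule sum.subset_diff[OF CB finB])
    also have "(\<Sum>b\<in>B - ?C. h (?aj g1 g2 g3 g4) a b) = (\<Sum>b\<in>B - ?C. h base a b)"
    proof (rule sum.cong)
      fix x assume x: "x \<in> B - ?C"
      have "outf Or (?aj g1 g2 g3 g4) x a = outf Or base x a" by (rule outf_cong) (use x in \<open>simp add: ajg_def\<close>)
      then show "h (?aj g1 g2 g3 g4) a x = h base a x" unfolding h_def by simp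
    qed simp
    also have "(\<Sum>b\<in>?C. h (?aj g1 g2 g3 g4) a b) = h (?aj g1 g2 g3 g4) a c1 + h (?aj g1 g2 g3 g4) a c2
      + h (?aj g1 g2 g3 g4) a c3 + h (?aj g1 g2 g3 g4) a c4"
      using dc by (simp add: add.assoc)
    finally show ?thesis .
  qed
  have hc: "h (?aj g1 g2 g3 g4) a c = (if a = ?aj g1 g2 g3 g4 c then sg Or c else - sg Or c)" if "c \<in> mixed Or" for g1 g2 g3 g4 a c
    unfolding h_def using h_mixed[OF that] by simp
  define K0 where "K0 = xR Or a0 + (\<Sum>b\<in>B - ?C. h base a0 b) - s3 - s4 - \<beta> a0"
  define K1 where "K1 = xR Or a1 + (\<Sum>b\<in>B - ?C. h base a1 b) - s1 - s2 - \<beta> a1"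
  have n0: "net (Dfin Or (?aj g1 g2 g3 g4)) a0 - \<beta> a0 = K0 + (if g1 then s1 else - s1) + (if g2 then s2 else - s2)" for g1 g2 g3 g4
  proof -
    have "a0 \<in> A" using Adef by simp
    from net_a[OF this, of Or "?aj g1 g2 g3 g4"] show ?thesis
      using split[of g1 g2 g3 g4 a0, unfolded h_def] hc[OF cs(1)] hc[OF cs(2)] hc[OF cs(3)] hc[OF cs(4)] dc d01 d02 d12
      unfolding K0_def s1_def s2_def s3_def s4_def h_def ajg_def by auto
  qed
  have n1: "net (Dfin Or (?aj g1 g2 g3 g4)) a1 - \<beta> a1 = K1 + (if g3 then s3 else - s3) + (if g4 then s4 else - s4)" for g1 g2 g3 g4
  proof -
    have "a1 \<in> A" using Adef by simp
    from net_a[OF this, of Or "?aj g1 g2 g3 g4"] show ?thesis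
      using split[of g1 g2 g3 g4 a1, unfolded h_def] hc[OF cs(1)] hc[OF cs(2)] hc[OF cs(3)] hc[OF cs(4)] dc d01 d02 d12
      unfolding K1_def s1_def s2_def s3_def s4_def h_def ajg_def by auto
  qed
  have "\<exists>g1 g2. (K0 + (if g1 then s1 else - s1) + (if g2 then s2 else - s2)) mod 3 = 0"
    unfolding s1_def s2_def by (rule pick2[OF sg_pm[of Or c1] sg_pm[of Or c2], of K0])
  then obtain g1 g2 where g12: "(K0 + (if g1 then s1 else - s1) + (if g2 then s2 else - s2)) mod 3 = 0" by (elim exE) (rule that)
  have "\<exists>g3 g4. (K1 + (if g3 then s3 else - s3) + (if g4 then s4 else - s4)) mod 3 = 0"
    unfolding s3_def s4_def by (rule pick2[OF sg_pm[of Or c3] sg_pm[of Or c4], of K1])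
  then obtain g3 g4 where g34: "(K1 + (if g3 then s3 else - s3) + (if g4 then s4 else - s4)) mod 3 = 0" by (elim exE) (rule that)
  let ?D = "Dfin Or (?aj g1 g2 g3 g4)"
  have ajA': "\<And>b. b \<in> B \<Longrightarrow> ?aj g1 g2 g3 g4 b \<in> A" using ajA by blast
  have ok: "\<forall>v\<in>V. net ?D v mod 3 = \<beta> v mod 3"
    by (rule all_ok[OF mx ajA']) (use n0 n1 g12 g34 in auto)
  have sc: "strongly_connected_orient V E ends ?D"
    using conn[where aj="?aj g1 g2 g3 g4", OF mx ajA'] hub[of g1 g2 g3 g4] unfolding Let_def by blast
  show ?thesis using ok sc by blast
qed

end



context K3 begin

lemma mixed_arc:
  assumes "b \<in> mixed Or" "a \<in> A"
  shows "(if (if sg Or b = 1 then a \<noteq> aj b else a = aj b) then (b, a) else (a, b)) \<in> arcs E ends (Dfin Or aj)"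
proof -
  have bB: "b \<in> B" using assms(1) mixed_sub by auto
  show ?thesis using arc_st[OF bB assms(2), of Or aj] assms(1) unfolding outf_def by simp
qed

lemma main_loc: "\<exists>D. strongly_connected_orient V E ends D \<and> (\<forall>v\<in>V. net D v mod 3 = \<beta> v mod 3)"
proof -
  obtain Or where mx: "ismax Or" using exists_max unfolding ismax_def by blast
  have c7: "7 \<le> card (mixed Or)" using seven[OF mx] .
  have a0A: "a0 \<in> A" and a1A: "a1 \<in> A" and a2A: "a2 \<in> A" using Adef by auto
  show ?thesis
  proof (cases "\<exists>p\<in>mixed Or. \<exists>q\<in>mixed Or. sg Or p = 1 \<and> sg Or q = -1")
    case True
    then obtain p q where pq: "p \<in> mixed Or" "q \<in> mixed Or" "sg Or p = 1" "sg Or q = -1" by blast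
    have pnq: "p \<noteq> q" using pq by auto
    have "card (mixed Or - {p, q}) = card (mixed Or) - 2"
      using card_Diff_subset[OF _ , of "{p,q}" "mixed Or"] pq pnq by simp
    then have "4 \<le> card (mixed Or - {p, q})" using c7 by simp
    then obtain xs where xs: "distinct xs" "set xs \<subseteq> mixed Or - {p, q}" "length xs = 4"
      using obtain_k[of "mixed Or - {p,q}" 4] fin_mixed by blast
    then obtain c1 c2 c3 c4 where xs4: "xs = [c1, c2, c3, c4]" using len4 by blast
    have cs: "c1 \<in> mixed Or" "c2 \<in> mixed Or" "c3 \<in> mixed Or" "c4 \<in> mixed Or" "distinct [c1, c2, c3, c4]"
      using xs xs4 by auto
    have cpq: "p \<notin> {c1, c2, c3, c4}" "q \<notin> {c1, c2, c3, c4}" using xs xs4 by auto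
    define base where "base b = (if b = p \<or> b = q then a0 else a2)" for b
    have base: "\<And>b. b \<in> B \<Longrightarrow> base b \<in> A" unfolding base_def using Adef by auto
    show ?thesis
    proof (rule finish[OF mx base cs])
      fix g1 g2 g3 g4
      let ?aj = "ajg base c1 c2 c3 c4 g1 g2 g3 g4"
      let ?R = "arcs E ends (Dfin Or ?aj)"
      have ajp: "?aj p = a0" "?aj q = a0" using cpq unfolding ajg_def base_def by auto
      have r1: "(a0, p) \<in> ?R" using mixed_arc[OF pq(1) a0A, of ?aj] pq ajp by simp
      have r2: "(p, a1) \<in> ?R" using mixed_arc[OF pq(1) a1A, of ?aj] pq ajp d01 by simp
      have r3: "(p, a2) \<in> ?R" using mixed_arc[OF pq(1) a2A, of ?aj] pq ajp d02 by simp
      have r4: "(q, a0) \<in> ?R" using mixed_arc[OF pq(2) a0A, of ?aj] pq ajp by simp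
      have r5: "(a1, q) \<in> ?R" using mixed_arc[OF pq(2) a1A, of ?aj] pq ajp d01 by simp
      have r6: "(a2, q) \<in> ?R" using mixed_arc[OF pq(2) a2A, of ?aj] pq ajp d02 by simp
      show "let D = Dfin Or ?aj in (a0, a1) \<in> (arcs E ends D)\<^sup>* \<and> (a0, a2) \<in> (arcs E ends D)\<^sup>* \<and>
         (a1, a0) \<in> (arcs E ends D)\<^sup>* \<and> (a2, a0) \<in> (arcs E ends D)\<^sup>*"
        unfolding Let_def
        using rtrancl_into_rtrancl[OF r_into_rtrancl[OF r1] r2] rtrancl_into_rtrancl[OF r_into_rtrancl[OF r1] r3]
          rtrancl_into_rtrancl[OF r_into_rtrancl[OF r5] r4] rtrancl_into_rtrancl[OF r_into_rtrancl[OF r6] r4] by blast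
    qed
  next
    case False
    have same: "sg Or p = sg Or q" if "p \<in> mixed Or" "q \<in> mixed Or" for p q
      using False that sg_pm[of Or p] sg_pm[of Or q] by auto
    obtain xs where xs: "distinct xs" "set xs \<subseteq> mixed Or" "length xs = 7"
      using obtain_k[of "mixed Or" 7] fin_mixed c7 by blast
    then obtain p1 p2 p3 c1 c2 c3 c4 where xs7: "xs = [p1, p2, p3, c1, c2, c3, c4]" using len7 by blast
    have sx: "set [p1, p2, p3, c1, c2, c3, c4] \<subseteq> mixed Or" "distinct [p1, p2, p3, c1, c2, c3, c4]"
      using xs xs7 by simp_all
    have ps: "p1 \<in> mixed Or" "p2 \<in> mixed Or" "p3 \<in> mixed Or" using sx(1) by simp_all
    have cs: "c1 \<in> mixed Or" "c2 \<in> mixed Or" "c3 \<in> mixed Or" "c4 \<in> mixed Or" "distinct [c1, c2, c3, c4]"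
      using sx by simp_all
    have cp: "p1 \<notin> {c1, c2, c3, c4}" "p2 \<notin> {c1, c2, c3, c4}" "p3 \<notin> {c1, c2, c3, c4}" "p1 \<noteq> p2" "p1 \<noteq> p3" "p2 \<noteq> p3"
      using sx(2) by simp_all
    define base where "base b = (if b = p1 then a0 else if b = p2 then a1 else a2)" for b
    have base: "\<And>b. b \<in> B \<Longrightarrow> base b \<in> A" unfolding base_def using Adef by auto
    have s2: "sg Or p2 = sg Or p1" and s3: "sg Or p3 = sg Or p1" using same[OF ps(2) ps(1)] same[OF ps(3) ps(1)] by auto
    show ?thesis
    proof (rule finish[OF mx base cs])
      fix g1 g2 g3 g4
      let ?aj = "ajg base c1 c2 c3 c4 g1 g2 g3 g4"
      let ?R = "arcs E ends (Dfin Or ?aj)"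
      have ajp: "?aj p1 = a0" "?aj p2 = a1" "?aj p3 = a2" using cp unfolding ajg_def base_def by auto
      note m1 = mixed_arc[OF ps(1), of _ ?aj] and m2 = mixed_arc[OF ps(2), of _ ?aj] and m3 = mixed_arc[OF ps(3), of _ ?aj]
      have "(a0, a1) \<in> ?R\<^sup>* \<and> (a0, a2) \<in> ?R\<^sup>* \<and> (a1, a0) \<in> ?R\<^sup>* \<and> (a2, a0) \<in> ?R\<^sup>*"
      proof (cases "sg Or p1 = 1")
        case True
        have r1: "(a0, p1) \<in> ?R" using m1[OF a0A] True ajp by simp
        have r2: "(p1, a1) \<in> ?R" using m1[OF a1A] True ajp d01 by simp
        have r3: "(p1, a2) \<in> ?R" using m1[OF a2A] True ajp d02 by simp
        have r4: "(a1, p2) \<in> ?R" using m2[OF a1A] True s2 ajp by simp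
        have r5: "(p2, a0) \<in> ?R" using m2[OF a0A] True s2 ajp d01 by simp
        have r6: "(a2, p3) \<in> ?R" using m3[OF a2A] True s3 ajp by simp
        have r7: "(p3, a0) \<in> ?R" using m3[OF a0A] True s3 ajp d02 by simp
        show ?thesis
          using rtrancl_into_rtrancl[OF r_into_rtrancl[OF r1] r2] rtrancl_into_rtrancl[OF r_into_rtrancl[OF r1] r3]
            rtrancl_into_rtrancl[OF r_into_rtrancl[OF r4] r5] rtrancl_into_rtrancl[OF r_into_rtrancl[OF r6] r7] by blast
      next
        case False
        have r1: "(p1, a0) \<in> ?R" using m1[OF a0A] False ajp by simp
        have r2: "(a1, p1) \<in> ?R" using m1[OF a1A] False ajp d01 by simp
        have r3: "(a2, p1) \<in> ?R" using m1[OF a2A] False ajp d02 by simp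
        have r4: "(p2, a1) \<in> ?R" using m2[OF a1A] False s2 ajp by simp
        have r5: "(a0, p2) \<in> ?R" using m2[OF a0A] False s2 ajp d01 by simp
        have r6: "(p3, a2) \<in> ?R" using m3[OF a2A] False s3 ajp by simp
        have r7: "(a0, p3) \<in> ?R" using m3[OF a0A] False s3 ajp d02 by simp
        show ?thesis
          using rtrancl_into_rtrancl[OF r_into_rtrancl[OF r5] r4] rtrancl_into_rtrancl[OF r_into_rtrancl[OF r7] r6]
            rtrancl_into_rtrancl[OF r_into_rtrancl[OF r2] r1] rtrancl_into_rtrancl[OF r_into_rtrancl[OF r3] r1] by blast
      qed
      then show "let D = Dfin Or ?aj in (a0, a1) \<in> (arcs E ends D)\<^sup>* \<and> (a0, a2) \<in> (arcs E ends D)\<^sup>* \<and>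
         (a1, a0) \<in> (arcs E ends D)\<^sup>* \<and> (a2, a0) \<in> (arcs E ends D)\<^sup>*"
        unfolding Let_def by blast
    qed
  qed
qed

end



lemma deg4_from_ec:
  assumes ec: "edge_connected 4 V E ends" and v: "v \<in> V"
  shows "4 \<le> card {e\<in>E. fst (ends e) = v \<or> snd (ends e) = v}"
proof (rule ccontr)
  let ?S = "{e\<in>E. fst (ends e) = v \<or> snd (ends e) = v}"
  assume "\<not> 4 \<le> card ?S"
  then have "card ?S < 4" by simp
  moreover have "?S \<subseteq> E" by blast
  ultimately have con: "connected_mg V (E - ?S) ends"
    using ec[unfolded edge_connected_def, THEN conjunct2, rule_format, of ?S] by blast
  have c2: "2 \<le> card V" using ec[unfolded edge_connected_def] by (rule conjunct1)
  have "\<exists>u\<in>V. u \<noteq> v"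
  proof (rule ccontr)
    assume "\<not> (\<exists>u\<in>V. u \<noteq> v)"
    then have "V \<subseteq> {v}" by blast
    then have "card V \<le> 1" using card_mono[of "{v}" V] by simp
    then show False using c2 by simp
  qed
  then obtain u where u: "u \<in> V" "u \<noteq> v" by blast
  have "(v, u) \<in> (ug_rel (E - ?S) ends)\<^sup>*" using con[unfolded connected_mg_def, rule_format, OF v u(1)] .
  then show False
  proof (cases rule: converse_rtranclE)
    case base then show False using u by simp
  next
    case (step y)
    then obtain e where e: "e \<in> E - ?S" "ends e = (v, y) \<or> ends e = (y, v)" unfolding ug_rel_def by blast
    have "\<not> (fst (ends e) = v \<or> snd (ends e) = v)" using e(1) by simp
    then show False using e(2) by force
  qed
qed

theorem mainTheorem13:
  fixes t :: nat and V :: "'a set" and E :: "'e set" and ends :: "'e \<Rightarrow> 'a \<times> 'a"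
  assumes "t \<ge> 14"
    and "is_K3t_plus t V E ends"
  shows "in_S3 V E ends"
proof -
  have mg: "multigraph V E ends" and ec: "edge_connected 4 V E ends" and sp: "contains_spanning_K3t t V E ends"
    using assms(2) unfolding is_K3t_plus_def by auto
  obtain A B where AB: "A \<inter> B = {}" "A \<union> B = V" "card A = 3" "card B = t"
    and K: "\<forall>a\<in>A. \<forall>b\<in>B. \<exists>e\<in>E. ends e = (a, b) \<or> ends e = (b, a)"
    using sp unfolding contains_spanning_K3t_def by blast
  obtain a0 a1 a2 where A3: "A = {a0, a1, a2}" "a0 \<noteq> a1" "a1 \<noteq> a2" "a0 \<noteq> a2"
    using AB(3) unfolding card_3_iff by blast
  have fE: "finite E" using mg unfolding multigraph_def by auto
  show ?thesis unfolding in_S3_def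
  proof (intro allI impI)
    fix \<beta> :: "'a \<Rightarrow> int"
    assume bs: "(\<Sum>v\<in>V. \<beta> v) mod 3 = 0"
    interpret K3 V E ends A B a0 a1 a2 t \<beta>
    proof (unfold_locales)
      show "multigraph V E ends" by (rule mg)
      show "\<And>v. v \<in> V \<Longrightarrow> 4 \<le> card {e \<in> E. fst (ends e) = v \<or> snd (ends e) = v}" by (rule deg4_from_ec[OF ec])
      show "A \<inter> B = {}" "A \<union> B = V" "card B = t" by (fact AB(1), fact AB(2), fact AB(4))
      show "A = {a0, a1, a2}" "a0 \<noteq> a1" "a0 \<noteq> a2" "a1 \<noteq> a2" by (fact A3(1), fact A3(2), fact A3(4), fact A3(3))
      show "14 \<le> t" by (fact assms(1))
      show "\<And>a b. a \<in> A \<Longrightarrow> b \<in> B \<Longrightarrow> \<exists>e\<in>E. ends e = (a, b) \<or> ends e = (b, a)" using K by blast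
      show "(\<Sum>v\<in>V. \<beta> v) mod 3 = 0" by (fact bs)
    qed
    obtain D where D: "strongly_connected_orient V E ends D" "\<forall>v\<in>V. net D v mod 3 = \<beta> v mod 3"
      using main_loc by blast
    have "int (outdeg E ends D v) - int (indeg E ends D v) = net D v" for v
      unfolding net_def using net_sum[OF fE] .
    then show "\<exists>D. strongly_connected_orient V E ends D \<and>
        (\<forall>v\<in>V. (int (outdeg E ends D v) - int (indeg E ends D v)) mod 3 = \<beta> v mod 3)"
      using D by auto
  qed
qed



end
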